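(* Let $B$ be a minimum-weight basis of the weighted uncertainty matroid $\mathcal{M}=(E,\mathcal{I},A,w)$. A set $Q\subseteq E$ is a certificate of $B$ if and only if $Q$ is a vertex cover of the graph $G^B$ (i.e., every edge of $G^B$, including every loop $\{f,f\}$, has an endpoint in $Q$).
   Context: A weighted uncertainty matroid $\mathcal{M}=(E,\mathcal{I},A,w)$ consists of a matroid $M=(E,\mathcal{I})$ on a finite set $E$, for each $e\in E$ a non-empty finite union $A_e$ of bounded real intervals (each open or closed), and a weight $w_e\in A_e$. $L_e=\inf A_e$, $U_e=\sup A_e$. A minimum-weight basis is a basis minimizing total weight. A weight assignment is $w^*$ with $w^*_e\in A_e$, consistent with $Q$ if $w^*_e=w_e$ on $Q$. $Q$ is a certificate of $B$ if for every weight assignment consistent with $Q$, $B$ is a minimum-weight basis with respect to it. For $e\in E\setminus B$ let $C_e$ be the unique circuit in $B\cup\{e\}$, $F_e=\{f\in C_e\setminus\{e\}: U_f>L_e\}$, $\hat F_e=\{f\in C_e\setminus\{e\}: U_f>w_e\}$. The graph $G^B$ has vertex set $E$ and edge set $\bigcup_{e\in E\setminus B}E^B_e$ (edges may be loops $\{f,f\}$), where: (1) if $w_e\ge U_f$ for all $f\in C_e\setminus\{e\}$ and some $f'\in C_e\setminus\{e\}$ has $w_{f'}>L_e$, then $E^B_e=\{\{e,e\}\}$; (2) if $w_e\ge U_f$ for all $f\in C_e\setminus\{e\}$ and $w_f\le L_e$ for all $f\in C_e\setminus\{e\}$, then $E^B_e=\{\{e,f\}: f\in F_e\}$; (3) if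 some $f\in C_e\setminus\{e\}$ has $w_e<U_f$ and some $f'\in C_e\setminus\{e\}$ has $w_{f'}>L_e$, then $E^B_e=\{\{f,f\}: f\in\hat F_e\cup\{e\}\}$; (4) if some $f\in C_e\setminus\{e\}$ has $w_e<U_f$ and $w_{f'}\le L_e$ for all $f'\in C_e\setminus\{e\}$, then $E^B_e=\{\{e,f\}: f\in F_e\setminus\hat F_e\}\cup\{\{f,f\}: f\in\hat F_e\}$. *)

theory Defs
  imports Main "HOL-Library.Extended_Real"
begin

definition matroid :: "'a set \<Rightarrow> 'a set set \<Rightarrow> bool" where
  "matroid E \<I> \<longleftrightarrow> finite E \<and> (\<forall>X\<in>\<I>. X \<subseteq> E) \<and> {} \<in> \<I>
     \<and> (\<forall>X Y. X \<in> \<I> \<longrightarrow> Y \<subseteq> X \<longrightarrow> Y \<in> \<I>)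
     \<and> (\<forall>X Y. X \<in> \<I> \<longrightarrow> Y \<in> \<I> \<longrightarrow> card X < card Y \<longrightarrow> (\<exists>y\<in>Y - X. insert y X \<in> \<I>))"

definition basis :: "'a set \<Rightarrow> 'a set set \<Rightarrow> 'a set \<Rightarrow> bool" where
  "basis E \<I> B \<longleftrightarrow> B \<in> \<I> \<and> (\<forall>X\<in>\<I>. B \<subseteq> X \<longrightarrow> X = B)"

definition circuit :: "'a set \<Rightarrow> 'a set set \<Rightarrow> 'a set \<Rightarrow> bool" where
  "circuit E \<I> C \<longleftrightarrow> C \<subseteq> E \<and> C \<notin> \<I> \<and> (\<forall>D. D \<subset> C \<longrightarrow> D \<in> \<I>)"

text \<open>The unique circuit contained in B \<union> {e} (for a basis B and e \<notin> B).\<close>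
definition fund_circuit :: "'a set \<Rightarrow> 'a set set \<Rightarrow> 'a set \<Rightarrow> 'a \<Rightarrow> 'a set" where
  "fund_circuit E \<I> B e = (THE C. circuit E \<I> C \<and> C \<subseteq> insert e B)"

definition min_weight_basis :: "'a set \<Rightarrow> 'a set set \<Rightarrow> ('a \<Rightarrow> real) \<Rightarrow> 'a set \<Rightarrow> bool" where
  "min_weight_basis E \<I> x B \<longleftrightarrow> basis E \<I> B \<and> (\<forall>B'. basis E \<I> B' \<longrightarrow> sum x B \<le> sum x B')"

definition open_or_closed_interval :: "real set \<Rightarrow> bool" where
  "open_or_closed_interval S \<longleftrightarrow> (\<exists>a b. S = {a..b} \<or> S = {a<..<b})"

definition uncertainty_area :: "real set \<Rightarrow> bool" where
  "uncertainty_area S \<longleftrightarrow> S \<noteq> {} \<and>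
     (\<exists>\<F>. finite \<F> \<and> (\<forall>J\<in>\<F>. open_or_closed_interval J) \<and> S = \<Union>\<F>)"

definition L :: "('a \<Rightarrow> real set) \<Rightarrow> 'a \<Rightarrow> real" where
  "L A e = Inf (A e)"

definition U :: "('a \<Rightarrow> real set) \<Rightarrow> 'a \<Rightarrow> real" where
  "U A e = Sup (A e)"

definition weighted_uncertainty_matroid ::
  "'a set \<Rightarrow> 'a set set \<Rightarrow> ('a \<Rightarrow> real set) \<Rightarrow> ('a \<Rightarrow> real) \<Rightarrow> bool" where
  "weighted_uncertainty_matroid E \<I> A w \<longleftrightarrow> matroid E \<I> \<and>
     (\<forall>e\<in>E. uncertainty_area (A e)) \<and> (\<forall>e\<in>E. w e \<in> A e)"

definition weight_assignment :: "'a set \<Rightarrow> ('a \<Rightarrow> real set) \<Rightarrow> ('a \<Rightarrow> real) \<Rightarrow> bool" where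
  "weight_assignment E A w' \<longleftrightarrow> (\<forall>e\<in>E. w' e \<in> A e)"

definition certificate ::
  "'a set \<Rightarrow> 'a set set \<Rightarrow> ('a \<Rightarrow> real set) \<Rightarrow> ('a \<Rightarrow> real) \<Rightarrow> 'a set \<Rightarrow> 'a set \<Rightarrow> bool" where
  "certificate E \<I> A w B Q \<longleftrightarrow>
     (\<forall>w'. weight_assignment E A w' \<longrightarrow> (\<forall>e\<in>Q. w' e = w e) \<longrightarrow> min_weight_basis E \<I> w' B)"

section \<open>The graph G^B; edges are sets {e,f} (a loop {f,f} is the singleton {f})\<close>

definition F_set :: "'a set \<Rightarrow> 'a set set \<Rightarrow> ('a \<Rightarrow> real set) \<Rightarrow> 'a set \<Rightarrow> 'a \<Rightarrow> 'a set" where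
  "F_set E \<I> A B e = {f \<in> fund_circuit E \<I> B e - {e}. U A f > L A e}"

definition F_hat :: "'a set \<Rightarrow> 'a set set \<Rightarrow> ('a \<Rightarrow> real set) \<Rightarrow> ('a \<Rightarrow> real) \<Rightarrow> 'a set \<Rightarrow> 'a \<Rightarrow> 'a set" where
  "F_hat E \<I> A w B e = {f \<in> fund_circuit E \<I> B e - {e}. U A f > w e}"

definition edges_of :: "'a set \<Rightarrow> 'a set set \<Rightarrow> ('a \<Rightarrow> real set) \<Rightarrow> ('a \<Rightarrow> real) \<Rightarrow> 'a set \<Rightarrow> 'a \<Rightarrow> 'a set set" where
  "edges_of E \<I> A w B e =
    (let C' = fund_circuit E \<I> B e - {e} in
     if (\<forall>f\<in>C'. w e \<ge> U A f) then
       (if (\<exists>f'\<in>C'. w f' > L A e) then {{e, e}}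
        else {{e, f} | f. f \<in> F_set E \<I> A B e})
     else
       (if (\<exists>f'\<in>C'. w f' > L A e) then {{f, f} | f. f \<in> F_hat E \<I> A w B e \<union> {e}}
        else {{e, f} | f. f \<in> F_set E \<I> A B e - F_hat E \<I> A w B e}
             \<union> {{f, f} | f. f \<in> F_hat E \<I> A w B e}))"

definition graph_edges :: "'a set \<Rightarrow> 'a set set \<Rightarrow> ('a \<Rightarrow> real set) \<Rightarrow> ('a \<Rightarrow> real) \<Rightarrow> 'a set \<Rightarrow> 'a set set" where
  "graph_edges E \<I> A w B = (\<Union>e\<in>E - B. edges_of E \<I> A w B e)"

definition vertex_cover :: "'a set set \<Rightarrow> 'a set \<Rightarrow> bool" where
  "vertex_cover Edges Q \<longleftrightarrow> (\<forall>ed\<in>Edges. ed \<inter> Q \<noteq> {})"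

end

theory Submission
  imports Defs
begin

lemma mat_sub: "matroid E I \<Longrightarrow> X \<in> I \<Longrightarrow> X \<subseteq> E"
  unfolding matroid_def by blast
lemma mat_fin: "matroid E I \<Longrightarrow> X \<in> I \<Longrightarrow> finite X"
  unfolding matroid_def by (meson finite_subset)
lemma mat_down: "matroid E I \<Longrightarrow> X \<in> I \<Longrightarrow> Y \<subseteq> X \<Longrightarrow> Y \<in> I"
  unfolding matroid_def by blast
lemma mat_aug: "matroid E I \<Longrightarrow> X \<in> I \<Longrightarrow> Y \<in> I \<Longrightarrow> card X < card Y \<Longrightarrow> \<exists>y\<in>Y-X. insert y X \<in> I"
  unfolding matroid_def by blast

lemma augment_to:
  assumes m: "matroid E I" and "X \<in> I" "Y \<in> I" "card X \<le> card Y"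
  shows "\<exists>K\<in>I. X \<subseteq> K \<and> K \<subseteq> X \<union> Y \<and> card K = card Y"
proof -
  have "\<forall>X. X \<in> I \<longrightarrow> card X \<le> card Y \<longrightarrow> card Y - card X = n \<longrightarrow> (\<exists>K\<in>I. X \<subseteq> K \<and> K \<subseteq> X \<union> Y \<and> card K = card Y)" for n
  proof (induction n)
    case 0 then show ?case by auto
  next
    case (Suc n)
    show ?case
    proof (intro allI impI)
      fix X assume X: "X \<in> I" "card X \<le> card Y" "card Y - card X = Suc n"
      then have "card X < card Y" by simp
      then obtain y where y: "y \<in> Y - X" "insert y X \<in> I" using mat_aug[OF m X(1) \<open>Y\<in>I\<close>] by blast
      have fin: "finite X" using mat_fin[OF m X(1)] .
      have c: "card (insert y X) = Suc (card X)" using y fin by simp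
      have "card (insert y X) \<le> card Y" "card Y - card (insert y X) = n" using c X by auto
      then obtain K where "K\<in>I" "insert y X \<subseteq> K" "K \<subseteq> insert y X \<union> Y" "card K = card Y"
        using Suc.IH y(2) by blast
      then show "\<exists>K\<in>I. X \<subseteq> K \<and> K \<subseteq> X \<union> Y \<and> card K = card Y" using y by blast
    qed
  qed
  then show ?thesis using assms by blast
qed

lemma basis_not_less:
  assumes m: "matroid E I" and b: "basis E I B" and X: "X \<in> I"
  shows "card X \<le> card B"
proof (rule ccontr)
  assume "\<not> card X \<le> card B"
  then have "card B < card X" by simp
  moreover have "B \<in> I" using b unfolding basis_def by blast
  ultimately obtain y where "y \<in> X - B" "insert y B \<in> I" using mat_aug[OF m _ X] by blast
  then show False using b unfolding basis_def by blast
qed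

lemma basis_of_card:
  assumes m: "matroid E I" and b: "basis E I B" and X: "X \<in> I" and c: "card X = card B"
  shows "basis E I X"
  unfolding basis_def
proof (intro conjI ballI impI X)
  fix Y assume Y: "Y \<in> I" "X \<subseteq> Y"
  have "card Y \<le> card X" using basis_not_less[OF m b Y(1)] c by simp
  moreover have "finite Y" using mat_fin[OF m Y(1)] .
  moreover have "card X \<le> card Y" using Y(2) \<open>finite Y\<close> card_mono by blast
  ultimately show "Y = X" using Y(2) card_subset_eq[of Y X] by simp
qed

lemma circuit_exists:
  assumes m: "matroid E I" and "X \<subseteq> E" "X \<notin> I"
  shows "\<exists>C\<subseteq>X. circuit E I C"
proof -
  have fin: "finite X" using assms m unfolding matroid_def by (meson finite_subset)
  obtain C where C: "C \<subseteq> X \<and> C \<notin> I" and mn: "\<forall>D. D \<subseteq> X \<and> D \<notin> I \<longrightarrow> card C \<le> card D"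
    using ex_has_least_nat[of "\<lambda>C. C \<subseteq> X \<and> C \<notin> I" X card] assms by blast
  have "circuit E I C" unfolding circuit_def
  proof (intro conjI allI impI)
    show "C \<subseteq> E" using C assms by blast
    show "C \<notin> I" using C by blast
    fix D assume D: "D \<subset> C"
    have "finite C" using C fin finite_subset by blast
    then have "card D < card C" using D psubset_card_mono by blast
    have "D \<subseteq> X" using D C by blast
    show "D \<in> I"
    proof (rule ccontr)
      assume "D \<notin> I"
      then have "card C \<le> card D" using mn \<open>D \<subseteq> X\<close> by blast
      then show False using \<open>card D < card C\<close> by simp
    qed
  qed
  then show ?thesis using C by blast
qed

lemma circuit_unique:
  assumes m: "matroid E I" and J: "J \<in> I" and c1: "circuit E I C1" and c2: "circuit E I C2"
    and s1: "C1 \<subseteq> insert e J" and s2: "C2 \<subseteq> insert e J"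
  shows "C1 = C2"
proof (rule ccontr)
  assume ne: "C1 \<noteq> C2"
  have d1: "C1 \<notin> I" using c1 unfolding circuit_def by blast
  have d2: "C2 \<notin> I" using c2 unfolding circuit_def by blast
  have e1: "e \<in> C1" using s1 d1 mat_down[OF m J, of C1] by blast
  have e2: "e \<in> C2" using s2 d2 mat_down[OF m J, of C2] by blast
  have n12: "\<not> C1 \<subseteq> C2"
  proof
    assume "C1 \<subseteq> C2" then have "C1 \<subset> C2" using ne by blast
    then show False using c2 d1 unfolding circuit_def by blast
  qed
  have n21: "\<not> C2 \<subseteq> C1"
  proof
    assume "C2 \<subseteq> C1" then have "C2 \<subset> C1" using ne by blast
    then show False using c1 d2 unfolding circuit_def by blast
  qed
  obtain g where g: "g \<in> C1" "g \<notin> C2" using n12 by blast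
  have ge: "g \<noteq> e" using g e2 by blast
  define S where "S = C1 \<union> C2"
  have finS: "finite S" using c1 c2 m unfolding S_def circuit_def matroid_def by (meson finite_Un finite_subset)
  have i1: "C1 - {g} \<in> I" using c1 g unfolding circuit_def by blast
  have i2: "S - {e} \<in> I" using mat_down[OF m J, of "S - {e}"] s1 s2 unfolding S_def by blast
  have "C1 \<subset> S" using n21 unfolding S_def by blast
  then have "card C1 < card S" using finS psubset_card_mono by blast
  moreover have "card (C1 - {g}) = card C1 - 1" using g by simp
  moreover have "card (S - {e}) = card S - 1" using e1 S_def by simp
  moreover have "card C1 > 0" using g finS \<open>C1 \<subset> S\<close> finite_subset card_gt_0_iff by blast
  ultimately have "card (C1 - {g}) \<le> card (S - {e})" by simp
  then obtain K where K: "K \<in> I" "C1 - {g} \<subseteq> K" "K \<subseteq> (C1 - {g}) \<union> (S - {e})" "card K = card (S - {e})"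
    using augment_to[OF m i1 i2] by blast
  have gK: "g \<notin> K"
  proof
    assume "g \<in> K" then have "C1 \<subseteq> K" using K(2) by blast
    then show False using mat_down[OF m K(1)] d1 by blast
  qed
  have KS: "K \<subseteq> S - {g}" using K(3) gK unfolding S_def by blast
  have "card (S - {g}) = card S - 1" using g S_def by simp
  then have "card K = card (S - {g})" using K(4) \<open>card (S - {e}) = card S - 1\<close> by simp
  then have "K = S - {g}" using KS finS by (metis card_subset_eq finite_Diff)
  then have "C2 \<subseteq> K" using g S_def by blast
  then show False using mat_down[OF m K(1)] d2 by blast
qed

lemma fund_circuit_props:
  assumes m: "matroid E I" and b: "basis E I B" and e: "e \<in> E" "e \<notin> B"
  shows "circuit E I (fund_circuit E I B e) \<and> fund_circuit E I B e \<subseteq> insert e B \<and> e \<in> fund_circuit E I B e"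
proof -
  have BI: "B \<in> I" using b unfolding basis_def by blast
  have "insert e B \<notin> I" using b e unfolding basis_def by blast
  moreover have "insert e B \<subseteq> E" using mat_sub[OF m BI] e by blast
  ultimately obtain C where C: "C \<subseteq> insert e B" "circuit E I C" using circuit_exists[OF m] by blast
  have "fund_circuit E I B e = C" unfolding fund_circuit_def
  proof (rule the_equality)
    show "circuit E I C \<and> C \<subseteq> insert e B" using C by blast
    fix C' assume "circuit E I C' \<and> C' \<subseteq> insert e B"
    then show "C' = C" using circuit_unique[OF m BI _ C(2) _ C(1)] by blast
  qed
  moreover have "e \<in> C"
  proof (rule ccontr)
    assume "e \<notin> C" then have "C \<subseteq> B" using C by blast
    then show False using mat_down[OF m BI] C(2) unfolding circuit_def by blast
  qed
  ultimately show ?thesis using C by simp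
qed

lemma swap_in:
  assumes m: "matroid E I" and b: "basis E I B" and e: "e \<in> E" "e \<notin> B"
    and f: "f \<in> fund_circuit E I B e - {e}"
  shows "basis E I (insert e (B - {f}))"
proof -
  note P = fund_circuit_props[OF m b e]
  have BI: "B \<in> I" using b unfolding basis_def by blast
  have fB: "f \<in> B" using P f by blast
  have ind: "insert e (B - {f}) \<in> I"
  proof (rule ccontr)
    assume ni: "insert e (B - {f}) \<notin> I"
    have sE: "insert e (B - {f}) \<subseteq> E" using mat_sub[OF m BI] e by blast
    obtain C where C: "C \<subseteq> insert e (B - {f})" "circuit E I C" using circuit_exists[OF m sE ni] by blast
    have s1: "C \<subseteq> insert e B" using C(1) by blast
    have "C = fund_circuit E I B e" using circuit_unique[OF m BI C(2) conjunct1[OF P] s1 conjunct1[OF conjunct2[OF P]]] .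
    then show False using C f by blast
  qed
  have "finite B" using mat_fin[OF m BI] .
  then have "card (insert e (B - {f})) = Suc (card (B - {f}))" using e by simp
  also have "\<dots> = card B" using card_Suc_Diff1[OF \<open>finite B\<close> fB] .
  finally have "card (insert e (B - {f})) = card B" .
  then show ?thesis using basis_of_card[OF m b ind] by simp
qed

lemma exchange:
  assumes m: "matroid E I" and b: "basis E I B" and b': "basis E I B'" and e: "e \<in> B'" "e \<notin> B"
  shows "\<exists>f\<in>fund_circuit E I B e - {e}. f \<notin> B' \<and> insert f (B' - {e}) \<in> I"
proof (rule ccontr)
  assume H: "\<not> ?thesis"
  have BI: "B \<in> I" using b unfolding basis_def by blast
  have B'I: "B' \<in> I" using b' unfolding basis_def by blast
  have eE: "e \<in> E" using mat_sub[OF m B'I] e by blast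
  note P = fund_circuit_props[OF m b eE e(2)]
  define X where "X = B' - {e}"
  define D where "D = fund_circuit E I B e - {e}"
  have XI: "X \<in> I" using mat_down[OF m B'I] X_def by blast
  have DI: "D \<in> I" using mat_down[OF m BI, of D] P D_def by blast
  have H': "\<forall>f\<in>D - X. insert f X \<notin> I" using H unfolding D_def X_def by blast
  have "card D \<le> card X"
  proof (rule ccontr)
    assume "\<not> card D \<le> card X"
    then obtain y where "y \<in> D - X" "insert y X \<in> I" using mat_aug[OF m XI DI] by force
    then show False using H' by blast
  qed
  then obtain K where K: "K \<in> I" "D \<subseteq> K" "K \<subseteq> D \<union> X" "card K = card X"
    using augment_to[OF m DI XI] by blast
  have finB': "finite B'" using mat_fin[OF m B'I] .
  have "card X = card B' - 1" using e X_def by simp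
  moreover have "card B' > 0" using e finB' card_gt_0_iff by blast
  ultimately have "card K < card B'" using K(4) by simp
  then obtain y where y: "y \<in> B' - K" "insert y K \<in> I" using mat_aug[OF m K(1) B'I] by blast
  have "y \<noteq> e"
  proof
    assume "y = e"
    then have "fund_circuit E I B e \<subseteq> insert y K" using K(2) D_def by blast
    then show False using mat_down[OF m y(2)] P unfolding circuit_def by blast
  qed
  then have yX: "y \<in> X" using y X_def by blast
  have finK: "finite K" using mat_fin[OF m K(1)] .
  have "card (insert y K) = Suc (card X)" using y finK K(4) by simp
  then have "card X < card (insert y K)" by simp
  then obtain z where z: "z \<in> insert y K - X" "insert z X \<in> I" using mat_aug[OF m XI y(2)] by blast
  have "z \<in> D - X" using z yX K(3) by blast
  then show False using H' z by blast
qed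

lemma opt_nec:
  assumes m: "matroid E I" and mw: "min_weight_basis E I x B" and e: "e \<in> E" "e \<notin> B"
    and f: "f \<in> fund_circuit E I B e - {e}"
  shows "x f \<le> x e"
proof -
  have b: "basis E I B" using mw unfolding min_weight_basis_def by blast
  note P = fund_circuit_props[OF m b e]
  have BI: "B \<in> I" using b unfolding basis_def by blast
  have finB: "finite B" using mat_fin[OF m BI] .
  have fB: "f \<in> B" using P f by blast
  have "basis E I (insert e (B - {f}))" using swap_in[OF m b e f] .
  then have "sum x B \<le> sum x (insert e (B - {f}))" using mw unfolding min_weight_basis_def by blast
  also have "\<dots> = x e + sum x (B - {f})" using e finB by simp
  also have "\<dots> = x e + sum x B - x f" using sum_diff1[of B x f] finB fB by simp
  finally show ?thesis by simp
qed

lemma opt_suff: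
  assumes m: "matroid E I" and b: "basis E I B"
    and H: "\<forall>e\<in>E - B. \<forall>f\<in>fund_circuit E I B e - {e}. x f \<le> x e"
  shows "min_weight_basis E I x B"
proof -
  have BI: "B \<in> I" using b unfolding basis_def by blast
  have finB: "finite B" using mat_fin[OF m BI] .
  have "\<forall>B'. basis E I B' \<longrightarrow> card (B' - B) = n \<longrightarrow> sum x B \<le> sum x B'" for n
  proof (induction n)
    case 0
    show ?case
    proof (intro allI impI)
      fix B' assume B': "basis E I B'" "card (B' - B) = 0"
      have B'I: "B' \<in> I" using B' unfolding basis_def by blast
      have "finite B'" using mat_fin[OF m B'I] .
      then have "B' \<subseteq> B" using B' by auto
      then have "B = B'" using B' BI unfolding basis_def by blast
      then show "sum x B \<le> sum x B'" by simp
    qed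
  next
    case (Suc n)
    show ?case
    proof (intro allI impI)
      fix B' assume B': "basis E I B'" "card (B' - B) = Suc n"
      have B'I: "B' \<in> I" using B' unfolding basis_def by blast
      have finB': "finite B'" using mat_fin[OF m B'I] .
      have "B' - B \<noteq> {}" using B'(2) by (metis card.empty nat.distinct(1))
      then obtain e where e: "e \<in> B'" "e \<notin> B" by blast
      have eE: "e \<in> E" using mat_sub[OF m B'I] e by blast
      note P = fund_circuit_props[OF m b eE e(2)]
      obtain f where f: "f \<in> fund_circuit E I B e - {e}" "f \<notin> B'" "insert f (B' - {e}) \<in> I"
        using exchange[OF m b B'(1) e] by blast
      have fB: "f \<in> B" using P f by blast
      have "card (insert f (B' - {e})) = Suc (card (B' - {e}))" using f finB' by simp
      also have "\<dots> = card B'" using card_Suc_Diff1[OF finB' e(1)] .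
      finally have cB'': "card (insert f (B' - {e})) = card B'" .
      have b'': "basis E I (insert f (B' - {e}))"
        using basis_of_card[OF m B'(1) f(3) cB''] .
      have "insert f (B' - {e}) - B = (B' - B) - {e}" using fB by blast
      then have "card (insert f (B' - {e}) - B) = n" using B'(2) e by simp
      then have "sum x B \<le> sum x (insert f (B' - {e}))" using Suc.IH b'' by blast
      also have "\<dots> = x f + sum x (B' - {e})" using f finB' by simp
      also have "\<dots> = x f + sum x B' - x e" using sum_diff1[of B' x e] finB' e by simp
      also have "\<dots> \<le> sum x B'" using H eE e f(1) by auto
      finally show "sum x B \<le> sum x B'" .
    qed
  qed
  then show ?thesis using b unfolding min_weight_basis_def by blast
qed


lemma area_bdd:
  assumes "uncertainty_area S" shows "S \<noteq> {} \<and> bdd_above S \<and> bdd_below S"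
proof -
  have ne: "S \<noteq> {}" and ex: "\<exists>F. finite F \<and> (\<forall>J\<in>F. open_or_closed_interval J) \<and> S = \<Union>F"
    using assms unfolding uncertainty_area_def by simp_all
  from ex obtain F where F0: "finite F \<and> (\<forall>J\<in>F. open_or_closed_interval J) \<and> S = \<Union>F" ..
  have F: "finite F" "\<forall>J\<in>F. open_or_closed_interval J" "S = \<Union>F" using F0 by simp_all
  have bJ: "bdd_above J \<and> bdd_below J" if "J \<in> F" for J
  proof -
    have "open_or_closed_interval J" using F(2) that by simp
    then obtain a b where "J = {a..b} \<or> J = {a<..<b}" unfolding open_or_closed_interval_def by metis
    then show ?thesis by auto
  qed
  have U: "S = (\<Union>J\<in>F. J)" using F(3) by simp
  have ba: "\<forall>J\<in>F. bdd_above J" using bJ by simp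
  have bb: "\<forall>J\<in>F. bdd_below J" using bJ by simp
  have "bdd_above (\<Union>J\<in>F. J)" by (rule iffD2[OF bdd_above_UN[OF F(1)] ba])
  moreover have "bdd_below (\<Union>J\<in>F. J)" by (rule iffD2[OF bdd_below_UN[OF F(1)] bb])
  ultimately show ?thesis using ne U by metis
qed

lemma ball_pairs: "(\<forall>ed\<in>{{e, f} | f. f \<in> S}. ed \<inter> Q \<noteq> {}) \<longleftrightarrow> (\<forall>f\<in>S. e \<in> Q \<or> f \<in> Q)"
  by (auto simp add: Setcompr_eq_image)

lemma ball_loops: "(\<forall>ed\<in>{{f, f} | f. f \<in> S}. ed \<inter> Q \<noteq> {}) \<longleftrightarrow> (\<forall>f\<in>S. f \<in> Q)"
  by (auto simp add: Setcompr_eq_image)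

lemma cover_abs:
  fixes C' :: "'a set" and u l w :: "'a \<Rightarrow> real"
  assumes e: "e \<notin> C'" and h1: "\<forall>f\<in>C'. w f \<le> w e \<and> w f \<le> u f" and h2: "l e \<le> w e"
  shows "(\<forall>ed\<in> (if (\<forall>f\<in>C'. w e \<ge> u f) then
       (if (\<exists>f'\<in>C'. w f' > l e) then {{e, e}}
        else {{e, f} | f. f \<in> {f \<in> C'. u f > l e}})
     else
       (if (\<exists>f'\<in>C'. w f' > l e) then {{f, f} | f. f \<in> {f \<in> C'. u f > w e} \<union> {e}}
        else {{e, f} | f. f \<in> {f \<in> C'. u f > l e} - {f \<in> C'. u f > w e}}
             \<union> {{f, f} | f. f \<in> {f \<in> C'. u f > w e}})). ed \<inter> Q \<noteq> {})
    \<longleftrightarrow> (\<forall>f\<in>C'. (e \<notin> Q \<and> f \<notin> Q \<longrightarrow> u f \<le> l e) \<and> (e \<in> Q \<and> f \<notin> Q \<longrightarrow> u f \<le> w e)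
          \<and> (e \<notin> Q \<and> f \<in> Q \<longrightarrow> w f \<le> l e))" (is "?L \<longleftrightarrow> (\<forall>f\<in>C'. ?P f)")
proof (cases "\<forall>f\<in>C'. w e \<ge> u f")
  case c1: True
  show ?thesis
  proof (cases "\<exists>f'\<in>C'. w f' > l e")
    case True
    then obtain f' where f': "f' \<in> C'" "w f' > l e" by blast
    have uf': "u f' \<ge> w f'" using h1 f' by blast
    have L: "?L \<longleftrightarrow> e \<in> Q" using c1 True by simp
    show ?thesis unfolding L
    proof
      assume eQ: "e \<in> Q"
      show "\<forall>f\<in>C'. ?P f"
      proof
        fix f assume f: "f \<in> C'"
        have "u f \<le> w e" using c1 f by blast
        then show "?P f" using eQ by blast
      qed
    next
      assume R: "\<forall>f\<in>C'. ?P f"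
      show "e \<in> Q"
      proof (rule ccontr)
        assume ne: "e \<notin> Q"
        have Pf: "?P f'" using R f'(1) by blast
        show False
        proof (cases "f' \<in> Q")
          case True
          then have "w f' \<le> l e" using Pf ne by blast
          then show False using f'(2) by simp
        next
          case False
          then have "u f' \<le> l e" using Pf ne by blast
          then show False using f'(2) uf' by simp
        qed
      qed
    qed
  next
    case False
    have wl: "\<forall>f\<in>C'. w f \<le> l e" using False by (simp add: not_less)
    have L: "?L \<longleftrightarrow> (\<forall>f\<in>{f \<in> C'. u f > l e}. e \<in> Q \<or> f \<in> Q)"
      unfolding if_P[OF c1] if_not_P[OF False] by (simp only: ball_pairs)
    show ?thesis unfolding L
    proof
      assume H: "\<forall>f\<in>{f \<in> C'. u f > l e}. e \<in> Q \<or> f \<in> Q"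
      show "\<forall>f\<in>C'. ?P f"
      proof
        fix f assume f: "f \<in> C'"
        have a: "u f \<le> w e" using c1 f by blast
        have b: "w f \<le> l e" using wl f by blast
        have c: "e \<notin> Q \<and> f \<notin> Q \<longrightarrow> u f \<le> l e"
        proof
          assume q: "e \<notin> Q \<and> f \<notin> Q"
          show "u f \<le> l e"
          proof (rule ccontr)
            assume "\<not> u f \<le> l e"
            then have "f \<in> {f \<in> C'. u f > l e}" using f by simp
            then show False using H q by blast
          qed
        qed
        show "?P f" using a b c by blast
      qed
    next
      assume R: "\<forall>f\<in>C'. ?P f"
      show "\<forall>f\<in>{f \<in> C'. u f > l e}. e \<in> Q \<or> f \<in> Q"
      proof
        fix f assume f: "f \<in> {f \<in> C'. u f > l e}"
        then have f1: "f \<in> C'" and f2: "u f > l e" by simp_all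
        have Pf: "?P f" using R f1 by blast
        show "e \<in> Q \<or> f \<in> Q"
        proof (rule ccontr)
          assume "\<not> (e \<in> Q \<or> f \<in> Q)"
          then have "u f \<le> l e" using Pf by blast
          then show False using f2 by simp
        qed
      qed
    qed
  qed
next
  case c1: False
  then obtain g where g: "g \<in> C'" "u g > w e" by (auto simp: not_le)
  show ?thesis
  proof (cases "\<exists>f'\<in>C'. w f' > l e")
    case True
    then obtain f' where f': "f' \<in> C'" "w f' > l e" by blast
    have uf': "u f' \<ge> w f'" using h1 f' by blast
    have L: "?L \<longleftrightarrow> (\<forall>f\<in>{f \<in> C'. u f > w e} \<union> {e}. f \<in> Q)"
      unfolding if_not_P[OF c1] if_P[OF True] by (simp only: ball_loops)
    show ?thesis unfolding L
    proof
      assume H: "\<forall>f\<in>{f \<in> C'. u f > w e} \<union> {e}. f \<in> Q"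
      then have eQ: "e \<in> Q" by blast
      show "\<forall>f\<in>C'. ?P f"
      proof
        fix f assume f: "f \<in> C'"
        have c: "f \<notin> Q \<longrightarrow> u f \<le> w e"
        proof
          assume q: "f \<notin> Q"
          show "u f \<le> w e"
          proof (rule ccontr)
            assume "\<not> u f \<le> w e"
            then have "f \<in> {f \<in> C'. u f > w e} \<union> {e}" using f by simp
            then show False using H q by blast
          qed
        qed
        show "?P f" using c eQ by blast
      qed
    next
      assume R: "\<forall>f\<in>C'. ?P f"
      have eQ: "e \<in> Q"
      proof (rule ccontr)
        assume ne: "e \<notin> Q"
        have Pf: "?P f'" using R f'(1) by blast
        show False
        proof (cases "f' \<in> Q")
          case True
          then have "w f' \<le> l e" using Pf ne by blast
          then show False using f'(2) by simp
        next
          case False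
          then have "u f' \<le> l e" using Pf ne by blast
          then show False using f'(2) uf' by simp
        qed
      qed
      show "\<forall>f\<in>{f \<in> C'. u f > w e} \<union> {e}. f \<in> Q"
      proof
        fix f assume f: "f \<in> {f \<in> C'. u f > w e} \<union> {e}"
        show "f \<in> Q"
        proof (cases "f = e")
          case True then show ?thesis using eQ by simp
        next
          case False
          then have f1: "f \<in> C'" and f2: "u f > w e" using f by simp_all
          have Pf: "?P f" using R f1 by blast
          show "f \<in> Q"
          proof (rule ccontr)
            assume "f \<notin> Q"
            then have "u f \<le> w e" using Pf eQ by blast
            then show False using f2 by simp
          qed
        qed
      qed
    qed
  next
    case False
    have wl: "\<forall>f\<in>C'. w f \<le> l e" using False by (simp add: not_less)
    have L: "?L \<longleftrightarrow> (\<forall>f\<in>{f \<in> C'. u f > l e} - {f \<in> C'. u f > w e}. e \<in> Q \<or> f \<in> Q)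
         \<and> (\<forall>f\<in>{f \<in> C'. u f > w e}. f \<in> Q)"
      unfolding if_not_P[OF c1] if_not_P[OF False] by (simp only: ball_Un ball_pairs ball_loops)
    show ?thesis unfolding L
    proof
      assume H: "(\<forall>f\<in>{f \<in> C'. u f > l e} - {f \<in> C'. u f > w e}. e \<in> Q \<or> f \<in> Q)
         \<and> (\<forall>f\<in>{f \<in> C'. u f > w e}. f \<in> Q)"
      show "\<forall>f\<in>C'. ?P f"
      proof
        fix f assume f: "f \<in> C'"
        have b: "w f \<le> l e" using wl f by blast
        have a: "f \<notin> Q \<longrightarrow> u f \<le> w e"
        proof
          assume q: "f \<notin> Q"
          show "u f \<le> w e"
          proof (rule ccontr)
            assume "\<not> u f \<le> w e"
            then have "f \<in> {f \<in> C'. u f > w e}" using f by simp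
            then show False using H q by blast
          qed
        qed
        have c: "e \<notin> Q \<and> f \<notin> Q \<longrightarrow> u f \<le> l e"
        proof
          assume q: "e \<notin> Q \<and> f \<notin> Q"
          then have uw: "u f \<le> w e" using a by blast
          show "u f \<le> l e"
          proof (rule ccontr)
            assume "\<not> u f \<le> l e"
            then have "f \<in> {f \<in> C'. u f > l e} - {f \<in> C'. u f > w e}" using f uw by simp
            then show False using H q by blast
          qed
        qed
        show "?P f" using a b c by blast
      qed
    next
      assume R: "\<forall>f\<in>C'. ?P f"
      have A1: "\<forall>f\<in>{f \<in> C'. u f > w e}. f \<in> Q"
      proof
        fix f assume f: "f \<in> {f \<in> C'. u f > w e}"
        then have f1: "f \<in> C'" and f2: "u f > w e" by simp_all
        have Pf: "?P f" using R f1 by blast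
        show "f \<in> Q"
        proof (rule ccontr)
          assume q: "f \<notin> Q"
          show False
          proof (cases "e \<in> Q")
            case True
            then have "u f \<le> w e" using Pf q by blast
            then show False using f2 by simp
          next
            case False
            then have "u f \<le> l e" using Pf q by blast
            then show False using f2 h2 by simp
          qed
        qed
      qed
      have A2: "\<forall>f\<in>{f \<in> C'. u f > l e} - {f \<in> C'. u f > w e}. e \<in> Q \<or> f \<in> Q"
      proof
        fix f assume f: "f \<in> {f \<in> C'. u f > l e} - {f \<in> C'. u f > w e}"
        then have f1: "f \<in> C'" and f2: "u f > l e" by simp_all
        have Pf: "?P f" using R f1 by blast
        show "e \<in> Q \<or> f \<in> Q"
        proof (rule ccontr)
          assume "\<not> (e \<in> Q \<or> f \<in> Q)"
          then have "u f \<le> l e" using Pf by blast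
          then show False using f2 by simp
        qed
      qed
      show "(\<forall>f\<in>{f \<in> C'. u f > l e} - {f \<in> C'. u f > w e}. e \<in> Q \<or> f \<in> Q)
         \<and> (\<forall>f\<in>{f \<in> C'. u f > w e}. f \<in> Q)" using A1 A2 by blast
    qed
  qed
qed

lemma edges_cover:
  assumes e: "e \<notin> fund_circuit E I B e - {e}"
    and h1: "\<forall>f\<in>fund_circuit E I B e - {e}. w f \<le> w e \<and> w f \<le> U A f" and h2: "L A e \<le> w e"
  shows "(\<forall>ed\<in>edges_of E I A w B e. ed \<inter> Q \<noteq> {}) \<longleftrightarrow>
    (\<forall>f\<in>fund_circuit E I B e - {e}. (e \<notin> Q \<and> f \<notin> Q \<longrightarrow> U A f \<le> L A e) \<and> (e \<in> Q \<and> f \<notin> Q \<longrightarrow> U A f \<le> w e)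
          \<and> (e \<notin> Q \<and> f \<in> Q \<longrightarrow> w f \<le> L A e))"
  using cover_abs[where e=e and C'="fund_circuit E I B e - {e}" and w=w and u="U A" and l="L A" and Q=Q, OF e h1 h2] unfolding edges_of_def Let_def F_set_def F_hat_def .

theorem corollary27:
  fixes E :: "'a set" and \<I> :: "'a set set" and A :: "'a \<Rightarrow> real set"
    and w :: "'a \<Rightarrow> real" and B Q :: "'a set"
  assumes "weighted_uncertainty_matroid E \<I> A w"
    and "min_weight_basis E \<I> w B"
    and "Q \<subseteq> E"
  shows "certificate E \<I> A w B Q \<longleftrightarrow> vertex_cover (graph_edges E \<I> A w B) Q"
proof -
  have m: "matroid E \<I>" and ar: "\<forall>e\<in>E. uncertainty_area (A e)" and wA: "\<forall>e\<in>E. w e \<in> A e"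
    using assms(1) unfolding weighted_uncertainty_matroid_def by blast+
  have bddA: "A x \<noteq> {} \<and> bdd_above (A x) \<and> bdd_below (A x)" if "x \<in> E" for x
    using area_bdd[of "A x"] ar that by simp
  have lo: "L A x \<le> a" if "x \<in> E" "a \<in> A x" for x a
    unfolding L_def using bddA[OF that(1)] that(2) cInf_lower by blast
  have hi: "a \<le> U A x" if "x \<in> E" "a \<in> A x" for x a
    unfolding U_def using bddA[OF that(1)] that(2) cSup_upper by blast
  have b: "basis E \<I> B" using assms(2) unfolding min_weight_basis_def by blast
  define C where "C e = fund_circuit E \<I> B e - {e}" for e
  have CE: "C e \<subseteq> E" if "e \<in> E - B" for e
    using fund_circuit_props[OF m b, of e] that unfolding C_def circuit_def by blast
  have wle: "w f \<le> w e" if "e \<in> E - B" "f \<in> C e" for e f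
    using opt_nec[OF m assms(2), of e f] that unfolding C_def by blast
  define P where "P e f \<longleftrightarrow> (e \<notin> Q \<and> f \<notin> Q \<longrightarrow> U A f \<le> L A e) \<and> (e \<in> Q \<and> f \<notin> Q \<longrightarrow> U A f \<le> w e)
          \<and> (e \<notin> Q \<and> f \<in> Q \<longrightarrow> w f \<le> L A e)" for e f
  have cert_iff: "certificate E \<I> A w B Q \<longleftrightarrow> (\<forall>e\<in>E - B. \<forall>f\<in>C e. P e f)"
  proof
    assume cert: "certificate E \<I> A w B Q"
    have key: "w' f \<le> w' e" if "weight_assignment E A w'" "\<forall>x\<in>Q. w' x = w x" "e \<in> E - B" "f \<in> C e"
      for w' e f
      using cert that opt_nec[OF m, of w' B e f] unfolding certificate_def C_def by blast
    show "\<forall>e\<in>E - B. \<forall>f\<in>C e. P e f"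
    proof (intro ballI)
      fix e f assume e: "e \<in> E - B" and f: "f \<in> C e"
      have fE: "f \<in> E" using CE e f by blast
      have eE: "e \<in> E" using e by blast
      have fe: "f \<noteq> e" using f unfolding C_def by blast
      show "P e f" unfolding P_def
      proof (intro conjI impI)
        assume q: "e \<notin> Q \<and> f \<notin> Q"
        show "U A f \<le> L A e"
        proof (rule ccontr)
          assume "\<not> U A f \<le> L A e"
          define mm where "mm = (U A f + L A e) / 2"
          have "mm < U A f" "L A e < mm" using \<open>\<not> U A f \<le> L A e\<close> unfolding mm_def by auto
          obtain a where a: "a \<in> A f" "mm < a"
            using less_cSup_iff[of "A f" mm] bddA[OF fE] \<open>mm < U A f\<close> unfolding U_def by auto
          obtain bb where bb: "bb \<in> A e" "bb < mm"
            using cInf_less_iff[of "A e" mm] bddA[OF eE] \<open>L A e < mm\<close> unfolding L_def by auto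
          define w' where "w' = w(f := a, e := bb)"
          have "weight_assignment E A w'" unfolding weight_assignment_def w'_def using wA a bb by auto
          moreover have "\<forall>x\<in>Q. w' x = w x" unfolding w'_def using q by auto
          ultimately have "w' f \<le> w' e" using key e f by blast
          then show False using fe a bb unfolding w'_def by auto
        qed
      next
        assume q: "e \<in> Q \<and> f \<notin> Q"
        show "U A f \<le> w e"
        proof (rule ccontr)
          assume "\<not> U A f \<le> w e"
          then have "w e < U A f" by simp
          then obtain a where a: "a \<in> A f" "w e < a"
            using less_cSup_iff[of "A f" "w e"] bddA[OF fE] unfolding U_def by auto
          define w' where "w' = w(f := a)"
          have "weight_assignment E A w'" unfolding weight_assignment_def w'_def using wA a by auto
          moreover have "\<forall>x\<in>Q. w' x = w x" unfolding w'_def using q by auto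
          ultimately have "w' f \<le> w' e" using key e f by blast
          then show False using fe a unfolding w'_def by auto
        qed
      next
        assume q: "e \<notin> Q \<and> f \<in> Q"
        show "w f \<le> L A e"
        proof (rule ccontr)
          assume "\<not> w f \<le> L A e"
          then have "L A e < w f" by simp
          then obtain bb where bb: "bb \<in> A e" "bb < w f"
            using cInf_less_iff[of "A e" "w f"] bddA[OF eE] unfolding L_def by auto
          define w' where "w' = w(e := bb)"
          have "weight_assignment E A w'" unfolding weight_assignment_def w'_def using wA bb by auto
          moreover have "\<forall>x\<in>Q. w' x = w x" unfolding w'_def using q by auto
          ultimately have "w' f \<le> w' e" using key e f by blast
          then show False using fe bb unfolding w'_def by auto
        qed
      qed
    qed
  next
    assume H: "\<forall>e\<in>E - B. \<forall>f\<in>C e. P e f"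
    show "certificate E \<I> A w B Q" unfolding certificate_def
    proof (intro allI impI)
      fix w' assume wa: "weight_assignment E A w'" and cons: "\<forall>e\<in>Q. w' e = w e"
      show "min_weight_basis E \<I> w' B"
      proof (rule opt_suff[OF m b], intro ballI)
        fix e f assume e: "e \<in> E - B" and f: "f \<in> fund_circuit E \<I> B e - {e}"
        have fC: "f \<in> C e" using f unfolding C_def .
        have fE: "f \<in> E" using CE e fC by blast
        have eE: "e \<in> E" using e by blast
        have Pef: "P e f" using H e fC by blast
        have we: "w' e \<in> A e" and wf: "w' f \<in> A f" using wa eE fE unfolding weight_assignment_def by auto
        have lo_e: "L A e \<le> w' e" using lo[OF eE we] .
        have hi_f: "w' f \<le> U A f" using hi[OF fE wf] .
        have wfe: "w f \<le> w e" using wle[OF e fC] .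
        show "w' f \<le> w' e"
        proof (cases "e \<in> Q"; cases "f \<in> Q")
          assume "e \<in> Q" "f \<in> Q" then show ?thesis using cons wfe by simp
        next
          assume "e \<in> Q" "f \<notin> Q" then show ?thesis using cons Pef hi_f unfolding P_def by force
        next
          assume "e \<notin> Q" "f \<in> Q" then show ?thesis using cons Pef lo_e unfolding P_def by force
        next
          assume "e \<notin> Q" "f \<notin> Q" then show ?thesis using Pef lo_e hi_f unfolding P_def by force
        qed
      qed
    qed
  qed
  have per_e: "(\<forall>ed\<in>edges_of E \<I> A w B e. ed \<inter> Q \<noteq> {}) \<longleftrightarrow> (\<forall>f\<in>C e. P e f)" if e: "e \<in> E - B" for e
  proof -
    have eE: "e \<in> E" using e by blast
    have h1: "\<forall>f\<in>fund_circuit E \<I> B e - {e}. w f \<le> w e \<and> w f \<le> U A f"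
    proof
      fix f assume f: "f \<in> fund_circuit E \<I> B e - {e}"
      then have fC: "f \<in> C e" unfolding C_def .
      have fE: "f \<in> E" using CE e fC by blast
      show "w f \<le> w e \<and> w f \<le> U A f" using wle[OF e fC] hi[OF fE] wA fE by blast
    qed
    have h2: "L A e \<le> w e" using lo[OF eE] wA eE by blast
    have ne: "e \<notin> fund_circuit E \<I> B e - {e}" by blast
    show ?thesis using edges_cover[OF ne h1 h2, of Q] unfolding P_def C_def by simp
  qed
  have "vertex_cover (graph_edges E \<I> A w B) Q \<longleftrightarrow> (\<forall>e\<in>E - B. \<forall>ed\<in>edges_of E \<I> A w B e. ed \<inter> Q \<noteq> {})"
    unfolding vertex_cover_def graph_edges_def by blast
  also have "\<dots> \<longleftrightarrow> (\<forall>e\<in>E - B. \<forall>f\<in>C e. P e f)" using per_e by simp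
  finally show ?thesis using cert_iff by simp
qed

end
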